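(* Let $(X_{i,j})_{1\le i\le g,\,1\le j\le n_i}$ be $\{0,1\}$-valued and suppose there is a probability measure $\nu$ on $[0,1]^g$ such that for all $0\le k_i\le n_i$, \[ P(S_1=k_1,\dots,S_g=k_g)=\binom{n_1}{k_1}\cdots\binom{n_g}{k_g}\int_{[0,1]^g}\prod_{i=1}^g\theta_i^{k_i}(1-\theta_i)^{n_i-k_i}\,d\nu(\theta_1,\dots,\theta_g), \] and every sequence with the same values of $(S_1,\dots,S_g)$ has the same probability. Then $\mathrm{Cov}_{k_1,\dots,k_g}=E_\nu\big[\prod_i(\theta_i-E_\nu\theta_i)^{k_i}\big]$ for all $0\le k_i\le n_i$; consequently $\mathrm{Cov}_{2k_1,\dots,2k_g}\ge0$ for all integers $0\le k_i\le\lfloor n_i/2\rfloor$; and, if $n_i\ge2$ for all $i$, the $g\times g$ matrix $C$ with $C_{ii}=\mathrm{Cov}$ with index $2$ in position $i$ and $0$ elsewhere, and $C_{ij}$ ($i\ne j$) $=\mathrm{Cov}$ with index $1$ in positions $i$ and $j$ and $0$ elsewhere, is positive semidefinite.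
   Context: $S_i=\sum_{j=1}^{n_i}X_{i,j}$. $w(i)=E[X_{i,1}]$ and $\mathrm{Cov}_{k_1,\dots,k_g}=E\Big[\prod_{i=1}^g\prod_{j=1}^{k_i}\big(X_{i,j}-w(i)\big)\Big]$. *)

theory Defs
  imports "HOL-Probability.Probability"
begin

text \<open>Indices are 0-based: group i ranges over i < g, position j over j < n i.
  The paper's X_{i,1} is X i 0 here.\<close>

definition wmean :: "'a measure \<Rightarrow> (nat \<Rightarrow> nat \<Rightarrow> 'a \<Rightarrow> real) \<Rightarrow> nat \<Rightarrow> real" where
  "wmean M X i = (\<integral>\<omega>. X i 0 \<omega> \<partial>M)"

definition cov :: "'a measure \<Rightarrow> (nat \<Rightarrow> nat \<Rightarrow> 'a \<Rightarrow> real) \<Rightarrow> nat \<Rightarrow> (nat \<Rightarrow> nat) \<Rightarrow> real" where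
  "cov M X g k = (\<integral>\<omega>. (\<Prod>i<g. \<Prod>j<k i. (X i j \<omega> - wmean M X i)) \<partial>M)"

definition covmat :: "'a measure \<Rightarrow> (nat \<Rightarrow> nat \<Rightarrow> 'a \<Rightarrow> real) \<Rightarrow> nat \<Rightarrow> nat \<Rightarrow> nat \<Rightarrow> real" where
  "covmat M X g i j =
     (if i = j then cov M X g (\<lambda>l. if l = i then 2 else 0)
      else cov M X g (\<lambda>l. if l = i \<or> l = j then 1 else 0))"

end

theory Submission
  imports Defs
begin


definition bern :: "real \<Rightarrow> real \<Rightarrow> real" where
  "bern t x = (if x = 1 then t else 1 - t)"

lemma sum_binary:
  fixes m :: nat
  assumes "z \<in> PiE {..<m} (\<lambda>_. {0,1::real})"
  shows "(\<Sum>j<m. z j) = real (card {j\<in>{..<m}. z j = 1})"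
proof -
  have "(\<Sum>j<m. z j) = (\<Sum>j<m. if z j = 1 then 1 else 0)"
    using assms by (intro sum.cong) (auto simp: PiE_iff)
  also have "\<dots> = real (card ({..<m} \<inter> {j. z j = 1}))"
    by (simp add: sum.If_cases)
  also have "{..<m} \<inter> {j. z j = 1} = {j\<in>{..<m}. z j = 1}" by auto
  finally show ?thesis .
qed

lemma prod_bern:
  fixes m :: nat
  assumes "z \<in> PiE {..<m} (\<lambda>_. {0,1::real})"
  shows "(\<Prod>j<m. bern t (z j)) = t ^ card {j\<in>{..<m}. z j = 1} * (1 - t) ^ (m - card {j\<in>{..<m}. z j = 1})"
proof -
  have "(\<Prod>j<m. bern t (z j)) = (\<Prod>j<m. if z j = 1 then t else 1 - t)"
    by (simp add: bern_def)
  also have "\<dots> = t ^ card ({..<m} \<inter> {j. z j = 1}) * (1 - t) ^ card ({..<m} \<inter> - {j. z j = 1})"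
    by (subst prod.If_cases) auto
  also have "card ({..<m} \<inter> - {j. z j = 1}) = m - card {j\<in>{..<m}. z j = 1}"
  proof -
    have "{..<m} \<inter> - {j. z j = 1} = {..<m} - {j\<in>{..<m}. z j = 1}" by auto
    then show ?thesis using card_Diff_subset[of "{j\<in>{..<m}. z j = 1}" "{..<m}"] by auto
  qed
  also have "{..<m} \<inter> {j. z j = 1} = {j\<in>{..<m}. z j = 1}" by auto
  finally show ?thesis .
qed

lemma card_binary_class:
  fixes m :: nat shows "card {z \<in> PiE {..<m} (\<lambda>_. {0,1::real}). (\<Sum>j<m. z j) = real k} = m choose k"
proof -
  let ?A = "{z \<in> PiE {..<m} (\<lambda>_. {0,1::real}). (\<Sum>j<m. z j) = real k}"
  let ?B = "{B. B \<subseteq> {..<m} \<and> card B = k}"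
  have "bij_betw (\<lambda>z. {j\<in>{..<m}. z j = 1}) ?A ?B"
  proof (rule bij_betw_byWitness[where f'="\<lambda>B. \<lambda>j\<in>{..<m}. if j \<in> B then 1 else 0"])
    show "\<forall>a\<in>?A. (\<lambda>j\<in>{..<m}. if j \<in> {j\<in>{..<m}. a j = 1} then 1 else 0) = a"
    proof
      fix a assume a: "a \<in> ?A"
      show "(\<lambda>j\<in>{..<m}. if j \<in> {j\<in>{..<m}. a j = 1} then 1 else 0) = a"
      proof
        fix j show "(\<lambda>j\<in>{..<m}. if j \<in> {j\<in>{..<m}. a j = 1} then 1 else (0::real)) j = a j"
          using a by (cases "j < m") (auto simp: PiE_iff extensional_def)
      qed
    qed
    show "\<forall>a'\<in>?B. {j \<in> {..<m}. (\<lambda>j\<in>{..<m}. if j \<in> a' then 1 else (0::real)) j = 1} = a'"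
      by auto
    show "(\<lambda>z. {j \<in> {..<m}. z j = 1}) ` ?A \<subseteq> ?B"
      using sum_binary by fastforce
    show "(\<lambda>B. \<lambda>j\<in>{..<m}. if j \<in> B then 1 else (0::real)) ` ?B \<subseteq> ?A"
    proof
      fix z assume "z \<in> (\<lambda>B. \<lambda>j\<in>{..<m}. if j \<in> B then 1 else (0::real)) ` ?B"
      then obtain B where B: "B \<subseteq> {..<m}" "card B = k" and z: "z = (\<lambda>j\<in>{..<m}. if j \<in> B then 1 else (0::real))" by auto
      have zP: "z \<in> PiE {..<m} (\<lambda>_. {0,1::real})" using z by auto
      have "{j\<in>{..<m}. z j = 1} = B" using B z by auto
      then show "z \<in> ?A" using sum_binary[OF zP] zP B by simp
    qed
  qed
  then have "card ?A = card ?B" by (rule bij_betw_same_card)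
  then show ?thesis by (simp add: n_subsets)
qed

lemma card_class:
  fixes g :: nat
  assumes "\<And>i. i < g \<Longrightarrow> k i \<le> n i"
  shows "card {y \<in> PiE {..<g} (\<lambda>i. PiE {..<n i} (\<lambda>_. {0,1::real})). \<forall>i<g. (\<Sum>j<n i. y i j) = real (k i)}
     = (\<Prod>i<g. n i choose k i)"
proof -
  have "card {y \<in> PiE {..<g} (\<lambda>i. PiE {..<n i} (\<lambda>_. {0,1::real})). \<forall>i<g. (\<Sum>j<n i. y i j) = real (k i)}
     = card (PiE {..<g} (\<lambda>i. {z \<in> PiE {..<n i} (\<lambda>_. {0,1::real}). (\<Sum>j<n i. z j) = real (k i)}))"
    by (rule arg_cong[where f=card]) (auto simp: PiE_iff extensional_def)
  also have "\<dots> = (\<Prod>i<g. card {z \<in> PiE {..<n i} (\<lambda>_. {0,1::real}). (\<Sum>j<n i. z j) = real (k i)})"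
    by (rule card_PiE) simp
  also have "\<dots> = (\<Prod>i<g. n i choose k i)"
    by (rule prod.cong) (simp_all add: card_binary_class)
  finally show ?thesis .
qed

lemma evt_sets_gen:
  fixes X :: "nat \<Rightarrow> nat \<Rightarrow> 'a \<Rightarrow> real"
  assumes meas: "\<And>i j. i < g \<Longrightarrow> j < n i \<Longrightarrow> X i j \<in> borel_measurable M"
  shows "{\<omega> \<in> space M. \<forall>i<g. \<forall>j<n i. X i j \<omega> = y i j} \<in> sets M"
proof -
  have "Measurable.pred M (\<lambda>\<omega>. \<forall>i\<in>{..<g}. \<forall>j\<in>{..<n i}. X i j \<omega> = y i j)"
  proof (rule pred_intros_finite(3))
    show "finite {..<g}" by simp
    fix i assume i: "i \<in> {..<g}"
    show "Measurable.pred M (\<lambda>\<omega>. \<forall>j\<in>{..<n i}. X i j \<omega> = y i j)"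
    proof (rule pred_intros_finite(3))
      show "finite {..<n i}" by simp
      fix j assume j: "j \<in> {..<n i}"
      have m: "X i j \<in> borel_measurable M" using i j meas by simp
      show "Measurable.pred M (\<lambda>\<omega>. X i j \<omega> = y i j)"
        by (rule pred_eq_const1[OF m]) (rule borel_closed, rule closed_singleton)
    qed
  qed
  moreover have "{\<omega> \<in> space M. \<forall>i<g. \<forall>j<n i. X i j \<omega> = y i j}
      = {\<omega> \<in> space M. \<forall>i\<in>{..<g}. \<forall>j\<in>{..<n i}. X i j \<omega> = y i j}" by blast
  ultimately show ?thesis unfolding pred_def by simp
qed




locale mix =
  M: prob_space M + nu: prob_space \<nu>
  for M :: "'a measure" and \<nu> :: "(nat \<Rightarrow> real) measure" +
  fixes X :: "nat \<Rightarrow> nat \<Rightarrow> 'a \<Rightarrow> real" and g :: nat and n :: "nat \<Rightarrow> nat"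
  assumes meas: "\<And>i j. i < g \<Longrightarrow> j < n i \<Longrightarrow> X i j \<in> borel_measurable M"
    and binary: "\<And>i j \<omega>. i < g \<Longrightarrow> j < n i \<Longrightarrow> \<omega> \<in> space M \<Longrightarrow> X i j \<omega> \<in> {0, 1}"
    and nu_sets: "sets \<nu> = sets (PiM {..<g} (\<lambda>_. restrict_space borel {0..1::real}))"
    and mixture: "\<And>k. (\<forall>i<g. k i \<le> n i) \<Longrightarrow>
        measure M {\<omega> \<in> space M. \<forall>i<g. (\<Sum>j<n i. X i j \<omega>) = real (k i)}
        = (\<Prod>i<g. real (n i choose k i)) *
          (\<integral>\<theta>. (\<Prod>i<g. \<theta> i ^ k i * (1 - \<theta> i) ^ (n i - k i)) \<partial>\<nu>)"
    and exch: "\<And>x y :: nat \<Rightarrow> nat \<Rightarrow> real.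
        (\<forall>i<g. \<forall>j<n i. x i j \<in> {0, 1} \<and> y i j \<in> {0, 1}) \<Longrightarrow>
        (\<forall>i<g. (\<Sum>j<n i. x i j) = (\<Sum>j<n i. y i j)) \<Longrightarrow>
        measure M {\<omega> \<in> space M. \<forall>i<g. \<forall>j<n i. X i j \<omega> = x i j}
        = measure M {\<omega> \<in> space M. \<forall>i<g. \<forall>j<n i. X i j \<omega> = y i j}"
begin

definition "Pset = PiE {..<g} (\<lambda>i. PiE {..<n i} (\<lambda>_. {0,1::real}))"
definition "evt y = {\<omega> \<in> space M. \<forall>i<g. \<forall>j<n i. X i j \<omega> = y i j}"

lemma finite_Pset: "finite Pset" unfolding Pset_def by (intro finite_PiE) auto

lemma evt_sets: "evt y \<in> sets M"
  unfolding evt_def by (rule evt_sets_gen[OF meas])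

lemma Pset_diff:
  assumes "a \<noteq> b" "a \<in> Pset" "b \<in> Pset"
  obtains i j where "i < g" "j < n i" "a i j \<noteq> b i j"
proof -
  have "\<exists>i\<in>{..<g}. a i \<noteq> b i"
  proof (rule ccontr)
    assume "\<not> (\<exists>i\<in>{..<g}. a i \<noteq> b i)"
    then have "a = b" using PiE_ext[OF assms(2)[unfolded Pset_def] assms(3)[unfolded Pset_def]] by blast
    with assms(1) show False by contradiction
  qed
  then obtain i where i: "i \<in> {..<g}" "a i \<noteq> b i" by blast
  have ai: "a i \<in> PiE {..<n i} (\<lambda>_. {0,1::real})" using PiE_mem[OF assms(2)[unfolded Pset_def] i(1)] by simp
  have bi: "b i \<in> PiE {..<n i} (\<lambda>_. {0,1::real})" using PiE_mem[OF assms(3)[unfolded Pset_def] i(1)] by simp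
  have "\<exists>j\<in>{..<n i}. a i j \<noteq> b i j"
  proof (rule ccontr)
    assume "\<not> (\<exists>j\<in>{..<n i}. a i j \<noteq> b i j)"
    then have "a i = b i" using PiE_ext[OF ai bi] by blast
    with i(2) show False by contradiction
  qed
  then obtain j where "j \<in> {..<n i}" "a i j \<noteq> b i j" by blast
  then show ?thesis using that i(1) by simp
qed

lemma space_nu: "space \<nu> = PiE {..<g} (\<lambda>_. {0..1::real})"
  using sets_eq_imp_space_eq[OF nu_sets] by (simp add: space_PiM)

lemma theta_range: "\<theta> \<in> space \<nu> \<Longrightarrow> i < g \<Longrightarrow> \<theta> i \<in> {0..1}"
  using space_nu by auto

lemma theta_meas[measurable]: "(\<lambda>\<theta>. \<theta> i) \<in> borel_measurable \<nu>"
proof (cases "i < g")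
  case True
  have "(\<lambda>\<theta>. \<theta> i) \<in> PiM {..<g} (\<lambda>_. restrict_space borel {0..1::real}) \<rightarrow>\<^sub>M restrict_space borel {0..1::real}"
    using True by (intro measurable_component_singleton) auto
  then have "(\<lambda>\<theta>. \<theta> i) \<in> \<nu> \<rightarrow>\<^sub>M restrict_space borel {0..1::real}"
    by (subst measurable_cong_sets[OF nu_sets refl])
  then show ?thesis by (simp add: measurable_restrict_space2_iff)
next
  case False
  have "(\<lambda>\<theta>. undefined :: real) \<in> borel_measurable \<nu>" by simp
  moreover have "\<And>\<theta>. \<theta> \<in> space \<nu> \<Longrightarrow> \<theta> i = undefined" using False space_nu by auto
  ultimately show ?thesis by (subst measurable_cong[of \<nu> "\<lambda>\<theta>. \<theta> i" "\<lambda>_. undefined"])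
qed

lemma bern_range: "t \<in> {0..1} \<Longrightarrow> bern t x \<in> {0..1}" by (auto simp: bern_def)

lemma bern_meas: "(\<lambda>\<theta>. bern (\<theta> i) c) \<in> borel_measurable \<nu>"
proof (cases "c = 1")
  case True
  then have "(\<lambda>\<theta>. bern (\<theta> i) c) = (\<lambda>\<theta>. \<theta> i)" by (simp add: bern_def)
  then show ?thesis using theta_meas by metis
next
  case False
  then have "(\<lambda>\<theta>. bern (\<theta> i) c) = (\<lambda>\<theta>. 1 - \<theta> i)" by (simp add: bern_def)
  then show ?thesis using borel_measurable_diff[OF borel_measurable_const theta_meas] by metis
qed

lemma integrable_bern: "integrable \<nu> (\<lambda>\<theta>. \<Prod>i<g. \<Prod>j<n i. bern (\<theta> i) (y i j))"
proof (rule nu.integrable_const_bound[where B=1])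
  show "AE \<theta> in \<nu>. norm (\<Prod>i<g. \<Prod>j<n i. bern (\<theta> i) (y i j)) \<le> 1"
  proof (rule AE_I2)
    fix \<theta> assume th: "\<theta> \<in> space \<nu>"
    have h: "\<And>i x. i < g \<Longrightarrow> 0 \<le> bern (\<theta> i) x \<and> bern (\<theta> i) x \<le> 1"
      using bern_range[OF theta_range[OF th]] by auto
    have "0 \<le> (\<Prod>i<g. \<Prod>j<n i. bern (\<theta> i) (y i j))"
      using h by (intro prod_nonneg) auto
    moreover have "(\<Prod>i<g. \<Prod>j<n i. bern (\<theta> i) (y i j)) \<le> 1"
      using h by (intro prod_le_1 conjI prod_nonneg ballI) auto
    ultimately show "norm (\<Prod>i<g. \<Prod>j<n i. bern (\<theta> i) (y i j)) \<le> 1" by simp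
  qed
  show "(\<lambda>\<theta>. \<Prod>i<g. \<Prod>j<n i. bern (\<theta> i) (y i j)) \<in> borel_measurable \<nu>"
    by (intro borel_measurable_prod bern_meas)
qed

end


context mix begin

lemma prob_evt:
  assumes y: "y \<in> Pset"
  shows "measure M (evt y) = (\<integral>\<theta>. (\<Prod>i<g. \<Prod>j<n i. bern (\<theta> i) (y i j)) \<partial>\<nu>)"
proof -
  define kk where "kk i = card {j\<in>{..<n i}. y i j = 1}" for i
  have yi: "i < g \<Longrightarrow> y i \<in> PiE {..<n i} (\<lambda>_. {0,1::real})" for i
    using PiE_mem[OF y[unfolded Pset_def], of i] by simp
  have kk_le: "\<forall>i<g. kk i \<le> n i"
  proof (intro allI impI)
    fix i
    have "kk i \<le> card {..<n i}" unfolding kk_def by (rule card_mono) auto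
    then show "kk i \<le> n i" by simp
  qed
  define cl where "cl = {y' \<in> Pset. \<forall>i<g. (\<Sum>j<n i. y' i j) = real (kk i)}"
  have "\<forall>i<g. (\<Sum>j<n i. y i j) = real (kk i)"
  proof (intro allI impI)
    fix i assume "i < g"
    then show "(\<Sum>j<n i. y i j) = real (kk i)" unfolding kk_def by (rule sum_binary[OF yi])
  qed
  then have ycl: "y \<in> cl" using y unfolding cl_def by blast
  have card_cl: "card cl = (\<Prod>i<g. n i choose kk i)"
    unfolding cl_def Pset_def by (rule card_class) (use kk_le in blast)
  have "\<forall>i\<in>{..<g}. (n i choose kk i) \<noteq> 0"
  proof
    fix i assume "i \<in> {..<g}"
    then have "kk i \<le> n i" using kk_le by blast
    then show "(n i choose kk i) \<noteq> 0" by simp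
  qed
  then have card_pos: "real (card cl) \<noteq> 0"
    unfolding card_cl of_nat_eq_0_iff by (subst prod_zero_iff) blast+
  have fin_cl: "finite cl"
    by (rule finite_subset[OF _ finite_Pset]) (unfold cl_def, blast)
  let ?E = "{\<omega> \<in> space M. \<forall>i<g. (\<Sum>j<n i. X i j \<omega>) = real (kk i)}"
  have E_eq: "?E = (\<Union>y'\<in>cl. evt y')"
  proof (intro equalityI subsetI)
    fix \<omega> assume \<omega>: "\<omega> \<in> ?E"
    define y' where "y' = (\<lambda>i\<in>{..<g}. \<lambda>j\<in>{..<n i}. X i j \<omega>)"
    have "y' \<in> Pset" using \<omega> binary unfolding y'_def Pset_def by auto
    moreover have "\<forall>i<g. (\<Sum>j<n i. y' i j) = real (kk i)" using \<omega> unfolding y'_def by auto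
    ultimately have "y' \<in> cl" unfolding cl_def by auto
    moreover have "\<omega> \<in> evt y'" using \<omega> unfolding evt_def y'_def by auto
    ultimately show "\<omega> \<in> (\<Union>y'\<in>cl. evt y')" by auto
  next
    fix \<omega> assume "\<omega> \<in> (\<Union>y'\<in>cl. evt y')"
    then obtain y' where "y' \<in> cl" "\<omega> \<in> evt y'" by auto
    then show "\<omega> \<in> ?E" unfolding cl_def evt_def by auto
  qed
  have disj: "disjoint_family_on evt cl"
  unfolding disjoint_family_on_def
  proof (intro ballI impI)
    fix a b assume ab: "a \<in> cl" "b \<in> cl" "a \<noteq> b"
    then have aP: "a \<in> Pset" and bP: "b \<in> Pset" unfolding cl_def by blast+
    obtain i j where ij: "i < g" "j < n i" "a i j \<noteq> b i j"
      using ab(3) aP bP by (rule Pset_diff)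
    show "evt a \<inter> evt b = {}"
    proof (rule equals0I)
      fix \<omega> assume "\<omega> \<in> evt a \<inter> evt b"
      then have "X i j \<omega> = a i j" "X i j \<omega> = b i j" using ij(1,2) unfolding evt_def by blast+
      with ij(3) show False by simp
    qed
  qed
  have "measure M ?E = (\<Sum>y'\<in>cl. measure M (evt y'))"
    unfolding E_eq using fin_cl disj evt_sets by (intro M.finite_measure_finite_Union) auto
  also have "\<dots> = (\<Sum>y'\<in>cl. measure M (evt y))"
  proof (rule sum.cong[OF refl])
    fix y' assume y': "y' \<in> cl"
    have "y' \<in> Pset" using y' unfolding cl_def by auto
    then show "measure M (evt y') = measure M (evt y)"
      unfolding evt_def using y' ycl
      by (intro exch) (auto simp: Pset_def cl_def)
  qed
  also have "\<dots> = real (card cl) * measure M (evt y)" by simp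
  finally have 1: "measure M ?E = real (card cl) * measure M (evt y)" .
  have 2: "measure M ?E = real (card cl) *
          (\<integral>\<theta>. (\<Prod>i<g. \<theta> i ^ kk i * (1 - \<theta> i) ^ (n i - kk i)) \<partial>\<nu>)"
    using mixture[OF kk_le] unfolding card_cl by simp
  have 3: "(\<integral>\<theta>. (\<Prod>i<g. \<Prod>j<n i. bern (\<theta> i) (y i j)) \<partial>\<nu>)
        = (\<integral>\<theta>. (\<Prod>i<g. \<theta> i ^ kk i * (1 - \<theta> i) ^ (n i - kk i)) \<partial>\<nu>)"
  proof (intro Bochner_Integration.integral_cong refl prod.cong)
    fix \<theta> :: "nat \<Rightarrow> real" and i assume "i \<in> {..<g}"
    then have "i < g" by simp
    then show "(\<Prod>j<n i. bern (\<theta> i) (y i j)) = \<theta> i ^ kk i * (1 - \<theta> i) ^ (n i - kk i)"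
      unfolding kk_def by (rule prod_bern[OF yi])
  qed
  show ?thesis using 1 2 3 card_pos by simp
qed

end


context mix begin

lemma expect_prod:
  fixes h :: "nat \<Rightarrow> nat \<Rightarrow> real \<Rightarrow> real"
  shows "(\<integral>\<omega>. (\<Prod>i<g. \<Prod>j<n i. h i j (X i j \<omega>)) \<partial>M)
       = (\<integral>\<theta>. (\<Prod>i<g. \<Prod>j<n i. h i j 0 * (1 - \<theta> i) + h i j 1 * \<theta> i) \<partial>\<nu>)"
proof -
  define f where "f y = (\<Prod>i<g. \<Prod>j<n i. h i j (y i j))" for y
  have pw: "(\<Prod>i<g. \<Prod>j<n i. h i j (X i j \<omega>)) = (\<Sum>y\<in>Pset. f y * indicator (evt y) \<omega>)"
    if \<omega>: "\<omega> \<in> space M" for \<omega>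
  proof -
    define y0 where "y0 = (\<lambda>i\<in>{..<g}. \<lambda>j\<in>{..<n i}. X i j \<omega>)"
    have y0P: "y0 \<in> Pset"
      unfolding y0_def Pset_def
    proof (rule restrict_PiE_iff[THEN iffD2], rule ballI)
      fix i assume i: "i \<in> {..<g}"
      show "(\<lambda>j\<in>{..<n i}. X i j \<omega>) \<in> PiE {..<n i} (\<lambda>_. {0,1::real})"
      proof (rule restrict_PiE_iff[THEN iffD2], rule ballI)
        fix j assume "j \<in> {..<n i}"
        then show "X i j \<omega> \<in> {0,1}" using binary[of i j \<omega>] i \<omega> by simp
      qed
    qed
    have ind: "indicator (evt y) \<omega> = (if y = y0 then 1 else (0::real))" if y: "y \<in> Pset" for y
    proof (cases "y = y0")
      case True
      have "\<omega> \<in> evt y0" unfolding evt_def y0_def using \<omega> by simp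
      then show ?thesis using True by simp
    next
      case False
      obtain i j where ij: "i < g" "j < n i" "y i j \<noteq> y0 i j"
        using False y y0P by (rule Pset_diff)
      have "y0 i j = X i j \<omega>" using ij(1,2) unfolding y0_def restrict_def by simp
      have "\<omega> \<notin> evt y"
      proof
        assume "\<omega> \<in> evt y"
        then have "X i j \<omega> = y i j" using ij(1,2) unfolding evt_def by blast
        with ij(3) \<open>y0 i j = X i j \<omega>\<close> show False by simp
      qed
      then show ?thesis using False by simp
    qed
    have "(\<Sum>y\<in>Pset. f y * indicator (evt y) \<omega>) = (\<Sum>y\<in>Pset. if y = y0 then f y else 0)"
      by (intro sum.cong refl) (simp add: ind)
    also have "\<dots> = f y0" using y0P finite_Pset by simp
    also have "f y0 = (\<Prod>i<g. \<Prod>j<n i. h i j (X i j \<omega>))"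
      unfolding f_def y0_def by (intro prod.cong refl) auto
    finally show ?thesis by simp
  qed
  have "(\<integral>\<omega>. (\<Prod>i<g. \<Prod>j<n i. h i j (X i j \<omega>)) \<partial>M) = (\<integral>\<omega>. (\<Sum>y\<in>Pset. f y * indicator (evt y) \<omega>) \<partial>M)"
    using pw by (intro Bochner_Integration.integral_cong) auto
  also have "\<dots> = (\<Sum>y\<in>Pset. (\<integral>\<omega>. f y * indicator (evt y) \<omega> \<partial>M))"
  proof (rule Bochner_Integration.integral_sum)
    fix y
    have "integrable M (\<lambda>\<omega>. f y * indicator (evt y) \<omega>)"
      by (rule integrable_real_mult_indicator[OF evt_sets]) simp
    then show "integrable M (\<lambda>\<omega>. f y * indicator (evt y) \<omega>)" .
  qed
  also have "\<dots> = (\<Sum>y\<in>Pset. f y * measure M (evt y))"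
  proof (rule sum.cong[OF refl])
    fix y
    have "evt y \<inter> space M = evt y" using evt_sets[of y] sets.sets_into_space by blast
    then show "(\<integral>\<omega>. f y * indicator (evt y) \<omega> \<partial>M) = f y * measure M (evt y)"
      by simp
  qed
  also have "\<dots> = (\<Sum>y\<in>Pset. (\<integral>\<theta>. f y * (\<Prod>i<g. \<Prod>j<n i. bern (\<theta> i) (y i j)) \<partial>\<nu>))"
  proof (rule sum.cong[OF refl])
    fix y assume "y \<in> Pset"
    then show "f y * measure M (evt y) = (\<integral>\<theta>. f y * (\<Prod>i<g. \<Prod>j<n i. bern (\<theta> i) (y i j)) \<partial>\<nu>)"
      by (simp add: prob_evt)
  qed
  also have "\<dots> = (\<integral>\<theta>. (\<Sum>y\<in>Pset. f y * (\<Prod>i<g. \<Prod>j<n i. bern (\<theta> i) (y i j))) \<partial>\<nu>)"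
  proof (rule Bochner_Integration.integral_sum[symmetric])
    fix y
    show "integrable \<nu> (\<lambda>\<theta>. f y * (\<Prod>i<g. \<Prod>j<n i. bern (\<theta> i) (y i j)))"
      by (rule integrable_mult_right) (rule integrable_bern)
  qed
  also have "\<dots> = (\<integral>\<theta>. (\<Prod>i<g. \<Prod>j<n i. h i j 0 * (1 - \<theta> i) + h i j 1 * \<theta> i) \<partial>\<nu>)"
  proof (intro Bochner_Integration.integral_cong refl)
    fix \<theta> :: "nat \<Rightarrow> real"
    have "(\<Sum>y\<in>Pset. f y * (\<Prod>i<g. \<Prod>j<n i. bern (\<theta> i) (y i j)))
        = (\<Sum>y\<in>Pset. \<Prod>i<g. \<Prod>j<n i. h i j (y i j) * bern (\<theta> i) (y i j))"
      unfolding f_def by (simp add: prod.distrib)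
    also have "\<dots> = (\<Prod>i<g. \<Sum>z\<in>PiE {..<n i} (\<lambda>_. {0,1::real}). \<Prod>j<n i. h i j (z j) * bern (\<theta> i) (z j))"
      unfolding Pset_def by (subst prod_sum_PiE) (auto intro!: finite_PiE)
    also have "\<dots> = (\<Prod>i<g. \<Prod>j<n i. \<Sum>t\<in>{0,1::real}. h i j t * bern (\<theta> i) t)"
      by (intro prod.cong refl, subst prod_sum_PiE) auto
    also have "\<dots> = (\<Prod>i<g. \<Prod>j<n i. h i j 0 * (1 - \<theta> i) + h i j 1 * \<theta> i)"
      by (simp add: bern_def)
    finally show "(\<Sum>y\<in>Pset. f y * (\<Prod>i<g. \<Prod>j<n i. bern (\<theta> i) (y i j)))
        = (\<Prod>i<g. \<Prod>j<n i. h i j 0 * (1 - \<theta> i) + h i j 1 * \<theta> i)" .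
  qed
  finally show ?thesis .
qed

end


context mix begin

lemma cov_gen:
  assumes k: "\<forall>i<g. k i \<le> n i"
  shows "(\<integral>\<omega>. (\<Prod>i<g. \<Prod>j<k i. (X i j \<omega> - c i)) \<partial>M) = (\<integral>\<theta>. (\<Prod>i<g. (\<theta> i - c i) ^ k i) \<partial>\<nu>)"
proof -
  define h where "h i j t = (if j < k i then t - c i else 1)" for i j and t :: real
  have L: "(\<lambda>\<omega>. \<Prod>i<g. \<Prod>j<k i. (X i j \<omega> - c i)) = (\<lambda>\<omega>. \<Prod>i<g. \<Prod>j<n i. h i j (X i j \<omega>))"
  proof (rule ext, rule prod.cong[OF refl])
    fix \<omega> i assume "i \<in> {..<g}"
    then have ki: "k i \<le> n i" using k by blast
    have "(\<Prod>j<n i. h i j (X i j \<omega>)) = (\<Prod>j\<in>{..<n i} \<inter> {j. j < k i}. X i j \<omega> - c i) * (\<Prod>j\<in>{..<n i} \<inter> - {j. j < k i}. 1)"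
      unfolding h_def by (rule prod.If_cases) simp
    also have "{..<n i} \<inter> {j. j < k i} = {..<k i}" using ki by auto
    finally show "(\<Prod>j<k i. X i j \<omega> - c i) = (\<Prod>j<n i. h i j (X i j \<omega>))" by simp
  qed
  have R: "(\<lambda>\<theta>. \<Prod>i<g. \<Prod>j<n i. h i j 0 * (1 - \<theta> i) + h i j 1 * \<theta> i) = (\<lambda>\<theta>. \<Prod>i<g. (\<theta> i - c i) ^ k i)"
  proof (rule ext, rule prod.cong[OF refl])
    fix \<theta> :: "nat \<Rightarrow> real" and i assume "i \<in> {..<g}"
    then have ki: "k i \<le> n i" using k by blast
    have "(\<Prod>j<n i. h i j 0 * (1 - \<theta> i) + h i j 1 * \<theta> i) = (\<Prod>j<n i. if j < k i then \<theta> i - c i else 1)"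
      unfolding h_def by (intro prod.cong refl) (simp add: algebra_simps)
    also have "\<dots> = (\<Prod>j\<in>{..<n i} \<inter> {j. j < k i}. \<theta> i - c i) * (\<Prod>j\<in>{..<n i} \<inter> - {j. j < k i}. 1)"
      by (rule prod.If_cases) simp
    also have "{..<n i} \<inter> {j. j < k i} = {..<k i}" using ki by auto
    finally show "(\<Prod>j<n i. h i j 0 * (1 - \<theta> i) + h i j 1 * \<theta> i) = (\<theta> i - c i) ^ k i" by simp
  qed
  have "(\<integral>\<omega>. (\<Prod>i<g. \<Prod>j<k i. (X i j \<omega> - c i)) \<partial>M) = (\<integral>\<omega>. (\<Prod>i<g. \<Prod>j<n i. h i j (X i j \<omega>)) \<partial>M)"
    by (rule arg_cong[where f="integral\<^sup>L M"]) (rule L)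
  also have "\<dots> = (\<integral>\<theta>. (\<Prod>i<g. \<Prod>j<n i. h i j 0 * (1 - \<theta> i) + h i j 1 * \<theta> i) \<partial>\<nu>)"
    by (rule expect_prod)
  also have "\<dots> = (\<integral>\<theta>. (\<Prod>i<g. (\<theta> i - c i) ^ k i) \<partial>\<nu>)"
    by (rule arg_cong[where f="integral\<^sup>L \<nu>"]) (rule R)
  finally show ?thesis .
qed

lemma wmean_eq:
  assumes i: "i < g" and ni: "0 < n i"
  shows "wmean M X i = (\<integral>\<theta>. \<theta> i \<partial>\<nu>)"
proof -
  define k where "k l = (if l = i then 1 else (0::nat))" for l
  have k: "\<forall>l<g. k l \<le> n l" using ni unfolding k_def by simp
  have L: "(\<lambda>\<omega>. \<Prod>l<g. \<Prod>j<k l. (X l j \<omega> - 0)) = (\<lambda>\<omega>. X i 0 \<omega>)"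
  proof
    fix \<omega>
    have "(\<Prod>l<g. \<Prod>j<k l. (X l j \<omega> - 0)) = (\<Prod>l<g. if l = i then X l 0 \<omega> else 1)"
      unfolding k_def by (intro prod.cong refl) simp
    also have "\<dots> = X i 0 \<omega>" using i by (subst prod.delta) simp_all
    finally show "(\<Prod>l<g. \<Prod>j<k l. (X l j \<omega> - 0)) = X i 0 \<omega>" .
  qed
  have R: "(\<lambda>\<theta>::nat\<Rightarrow>real. \<Prod>l<g. (\<theta> l - 0) ^ k l) = (\<lambda>\<theta>. \<theta> i)"
  proof
    fix \<theta> :: "nat \<Rightarrow> real"
    have "(\<Prod>l<g. (\<theta> l - 0) ^ k l) = (\<Prod>l<g. if l = i then \<theta> l else 1)"
      unfolding k_def by (intro prod.cong refl) simp
    also have "\<dots> = \<theta> i" using i by (subst prod.delta) simp_all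
    finally show "(\<Prod>l<g. (\<theta> l - 0) ^ k l) = \<theta> i" .
  qed
  have "(\<integral>\<omega>. (\<Prod>l<g. \<Prod>j<k l. (X l j \<omega> - 0)) \<partial>M) = (\<integral>\<theta>. (\<Prod>l<g. (\<theta> l - 0) ^ k l) \<partial>\<nu>)"
    by (rule cov_gen[OF k])
  moreover have "(\<integral>\<omega>. (\<Prod>l<g. \<Prod>j<k l. (X l j \<omega> - 0)) \<partial>M) = (\<integral>\<omega>. X i 0 \<omega> \<partial>M)"
    by (rule arg_cong[where f="integral\<^sup>L M"]) (rule L)
  moreover have "(\<integral>\<theta>. (\<Prod>l<g. (\<theta> l - 0) ^ k l) \<partial>\<nu>) = (\<integral>\<theta>. \<theta> i \<partial>\<nu>)"
    by (rule arg_cong[where f="integral\<^sup>L \<nu>"]) (rule R)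
  ultimately show ?thesis unfolding wmean_def by simp
qed

lemma integrable_dd:
  assumes "i < g" "j < g"
  shows "integrable \<nu> (\<lambda>\<theta>. (\<theta> i - a) * (\<theta> j - b))"
proof (rule nu.integrable_const_bound[where B="(1 + \<bar>a\<bar>) * (1 + \<bar>b\<bar>)"])
  show "AE \<theta> in \<nu>. norm ((\<theta> i - a) * (\<theta> j - b)) \<le> (1 + \<bar>a\<bar>) * (1 + \<bar>b\<bar>)"
  proof (rule AE_I2)
    fix \<theta> assume th: "\<theta> \<in> space \<nu>"
    have 1: "\<bar>\<theta> i - a\<bar> \<le> 1 + \<bar>a\<bar>" using theta_range[OF th assms(1)] by auto
    have 2: "\<bar>\<theta> j - b\<bar> \<le> 1 + \<bar>b\<bar>" using theta_range[OF th assms(2)] by auto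
    have "\<bar>\<theta> i - a\<bar> * \<bar>\<theta> j - b\<bar> \<le> (1 + \<bar>a\<bar>) * (1 + \<bar>b\<bar>)"
      by (rule mult_mono[OF 1 2]) simp_all
    then show "norm ((\<theta> i - a) * (\<theta> j - b)) \<le> (1 + \<bar>a\<bar>) * (1 + \<bar>b\<bar>)"
      by (simp add: abs_mult)
  qed
  show "(\<lambda>\<theta>. (\<theta> i - a) * (\<theta> j - b)) \<in> borel_measurable \<nu>"
    by (intro borel_measurable_times borel_measurable_diff theta_meas borel_measurable_const)
qed

end

theorem mainTheorem6:
  fixes M :: "'a measure" and X :: "nat \<Rightarrow> nat \<Rightarrow> 'a \<Rightarrow> real"
    and g :: nat and n :: "nat \<Rightarrow> nat" and \<nu> :: "(nat \<Rightarrow> real) measure"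
  assumes M: "prob_space M"
    and meas: "\<And>i j. i < g \<Longrightarrow> j < n i \<Longrightarrow> X i j \<in> borel_measurable M"
    and binary: "\<And>i j \<omega>. i < g \<Longrightarrow> j < n i \<Longrightarrow> \<omega> \<in> space M \<Longrightarrow> X i j \<omega> \<in> {0, 1}"
    and nu: "prob_space \<nu>"
    and nu_sets: "sets \<nu> = sets (PiM {..<g} (\<lambda>_. restrict_space borel {0..1::real}))"
    and mixture: "\<And>k. (\<forall>i<g. k i \<le> n i) \<Longrightarrow>
        measure M {\<omega> \<in> space M. \<forall>i<g. (\<Sum>j<n i. X i j \<omega>) = real (k i)}
        = (\<Prod>i<g. real (n i choose k i)) *
          (\<integral>\<theta>. (\<Prod>i<g. \<theta> i ^ k i * (1 - \<theta> i) ^ (n i - k i)) \<partial>\<nu>)"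
    and exch: "\<And>x y :: nat \<Rightarrow> nat \<Rightarrow> real.
        (\<forall>i<g. \<forall>j<n i. x i j \<in> {0, 1} \<and> y i j \<in> {0, 1}) \<Longrightarrow>
        (\<forall>i<g. (\<Sum>j<n i. x i j) = (\<Sum>j<n i. y i j)) \<Longrightarrow>
        measure M {\<omega> \<in> space M. \<forall>i<g. \<forall>j<n i. X i j \<omega> = x i j}
        = measure M {\<omega> \<in> space M. \<forall>i<g. \<forall>j<n i. X i j \<omega> = y i j}"
  shows "(\<forall>k. (\<forall>i<g. k i \<le> n i) \<longrightarrow>
            cov M X g k = (\<integral>\<theta>. (\<Prod>i<g. (\<theta> i - (\<integral>\<theta>'. \<theta>' i \<partial>\<nu>)) ^ k i) \<partial>\<nu>))
       \<and> (\<forall>k. (\<forall>i<g. k i \<le> n i div 2) \<longrightarrow> cov M X g (\<lambda>i. 2 * k i) \<ge> 0)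
       \<and> ((\<forall>i<g. 2 \<le> n i) \<longrightarrow>
            (\<forall>v :: nat \<Rightarrow> real. (\<Sum>i<g. \<Sum>j<g. v i * covmat M X g i j * v j) \<ge> 0))"
proof -
  have mixI: "mix M \<nu> X g n"
  proof (rule mix.intro[OF M nu], rule mix_axioms.intro)
    show "\<And>i j. i < g \<Longrightarrow> j < n i \<Longrightarrow> X i j \<in> borel_measurable M" by (rule meas)
    show "\<And>i j \<omega>. i < g \<Longrightarrow> j < n i \<Longrightarrow> \<omega> \<in> space M \<Longrightarrow> X i j \<omega> \<in> {0, 1}" by (rule binary)
    show "sets \<nu> = sets (PiM {..<g} (\<lambda>_. restrict_space borel {0..1::real}))" by (rule nu_sets)
    show "\<And>k. (\<forall>i<g. k i \<le> n i) \<Longrightarrow>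
        measure M {\<omega> \<in> space M. \<forall>i<g. (\<Sum>j<n i. X i j \<omega>) = real (k i)}
        = (\<Prod>i<g. real (n i choose k i)) *
          (\<integral>\<theta>. (\<Prod>i<g. \<theta> i ^ k i * (1 - \<theta> i) ^ (n i - k i)) \<partial>\<nu>)" by (rule mixture)
    show "\<And>x y :: nat \<Rightarrow> nat \<Rightarrow> real.
        (\<forall>i<g. \<forall>j<n i. x i j \<in> {0, 1} \<and> y i j \<in> {0, 1}) \<Longrightarrow>
        (\<forall>i<g. (\<Sum>j<n i. x i j) = (\<Sum>j<n i. y i j)) \<Longrightarrow>
        measure M {\<omega> \<in> space M. \<forall>i<g. \<forall>j<n i. X i j \<omega> = x i j}
        = measure M {\<omega> \<in> space M. \<forall>i<g. \<forall>j<n i. X i j \<omega> = y i j}" by (rule exch)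
  qed
  interpret mix M \<nu> X g n by (rule mixI)
  define m where "m i = (\<integral>\<theta>. \<theta> i \<partial>\<nu>)" for i
  have P1: "cov M X g k = (\<integral>\<theta>. (\<Prod>i<g. (\<theta> i - m i) ^ k i) \<partial>\<nu>)"
    if k: "\<forall>i<g. k i \<le> n i" for k
  proof -
    have "cov M X g k = (\<integral>\<theta>. (\<Prod>i<g. (\<theta> i - wmean M X i) ^ k i) \<partial>\<nu>)"
      unfolding cov_def by (rule cov_gen[OF k])
    also have "(\<lambda>\<theta>::nat\<Rightarrow>real. \<Prod>i<g. (\<theta> i - wmean M X i) ^ k i) = (\<lambda>\<theta>. \<Prod>i<g. (\<theta> i - m i) ^ k i)"
    proof (rule ext, rule prod.cong[OF refl])
      fix \<theta> :: "nat \<Rightarrow> real" and i assume "i \<in> {..<g}"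
      then have i: "i < g" by simp
      show "(\<theta> i - wmean M X i) ^ k i = (\<theta> i - m i) ^ k i"
      proof (cases "k i = 0")
        case True then show ?thesis by simp
      next
        case False
        then have "0 < n i" using k i by (metis gr0I le_zero_eq)
        then show ?thesis using wmean_eq[OF i] unfolding m_def by simp
      qed
    qed
    finally show ?thesis .
  qed
  have part1: "\<forall>k. (\<forall>i<g. k i \<le> n i) \<longrightarrow>
            cov M X g k = (\<integral>\<theta>. (\<Prod>i<g. (\<theta> i - (\<integral>\<theta>'. \<theta>' i \<partial>\<nu>)) ^ k i) \<partial>\<nu>)"
    using P1 unfolding m_def by blast
  have part2: "\<forall>k. (\<forall>i<g. k i \<le> n i div 2) \<longrightarrow> cov M X g (\<lambda>i. 2 * k i) \<ge> 0"
  proof (intro allI impI)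
    fix k :: "nat \<Rightarrow> nat" assume k: "\<forall>i<g. k i \<le> n i div 2"
    have k2: "\<forall>i<g. 2 * k i \<le> n i"
    proof (intro allI impI)
      fix i assume "i < g"
      then have "k i \<le> n i div 2" using k by blast
      then show "2 * k i \<le> n i" by linarith
    qed
    have "0 \<le> (\<integral>\<theta>. (\<Prod>i<g. (\<theta> i - m i) ^ (2 * k i)) \<partial>\<nu>)"
    proof (rule Bochner_Integration.integral_nonneg)
      fix \<theta> :: "nat \<Rightarrow> real"
      show "0 \<le> (\<Prod>i<g. (\<theta> i - m i) ^ (2 * k i))"
      proof (rule prod_nonneg)
        fix i assume "i \<in> {..<g}"
        have "(\<theta> i - m i) ^ (2 * k i) = ((\<theta> i - m i)\<^sup>2) ^ k i" by (simp add: power_mult)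
        also have "0 \<le> \<dots>" by (rule zero_le_power) simp
        finally show "0 \<le> (\<theta> i - m i) ^ (2 * k i)" .
      qed
    qed
    then show "0 \<le> cov M X g (\<lambda>i. 2 * k i)" using P1[OF k2] by simp
  qed
  have part3: "(\<forall>i<g. 2 \<le> n i) \<longrightarrow>
            (\<forall>v :: nat \<Rightarrow> real. (\<Sum>i<g. \<Sum>j<g. v i * covmat M X g i j * v j) \<ge> 0)"
  proof (intro impI allI)
    fix v :: "nat \<Rightarrow> real"
    assume n2: "\<forall>i<g. 2 \<le> n i"
    define d where "d i \<theta> = (\<theta> i - m i)" for i and \<theta> :: "nat \<Rightarrow> real"
    have C: "covmat M X g i j = (\<integral>\<theta>. d i \<theta> * d j \<theta> \<partial>\<nu>)" if ij: "i < g" "j < g" for i j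
    proof (cases "i = j")
      case True
      define k where "k l = (if l = i then 2 else (0::nat))" for l
      have k: "\<forall>l<g. k l \<le> n l" using n2 unfolding k_def by simp
      have "(\<lambda>\<theta>. \<Prod>l<g. (\<theta> l - m l) ^ k l) = (\<lambda>\<theta>. d i \<theta> * d j \<theta>)"
      proof
        fix \<theta> :: "nat \<Rightarrow> real"
        have "(\<Prod>l<g. (\<theta> l - m l) ^ k l) = (\<Prod>l<g. if l = i then (\<theta> l - m l)\<^sup>2 else 1)"
          unfolding k_def by (intro prod.cong refl) simp
        also have "\<dots> = (\<theta> i - m i)\<^sup>2" using ij by (subst prod.delta) simp_all
        finally show "(\<Prod>l<g. (\<theta> l - m l) ^ k l) = d i \<theta> * d j \<theta>"
          using True unfolding d_def by (simp add: power2_eq_square)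
      qed
      moreover have "covmat M X g i j = cov M X g k"
        unfolding covmat_def k_def using True by simp
      ultimately show ?thesis using P1[OF k] by simp
    next
      case False
      define k where "k l = (if l = i \<or> l = j then 1 else (0::nat))" for l
      have k: "\<forall>l<g. k l \<le> n l" using n2 unfolding k_def by fastforce
      have "(\<lambda>\<theta>. \<Prod>l<g. (\<theta> l - m l) ^ k l) = (\<lambda>\<theta>. d i \<theta> * d j \<theta>)"
      proof
        fix \<theta> :: "nat \<Rightarrow> real"
        have "(\<Prod>l<g. (\<theta> l - m l) ^ k l) = (\<Prod>l<g. if l \<in> {i, j} then d l \<theta> else 1)"
          unfolding k_def d_def by (intro prod.cong refl) simp
        also have "\<dots> = (\<Prod>l\<in>{..<g} \<inter> {l. l \<in> {i, j}}. d l \<theta>) * (\<Prod>l\<in>{..<g} \<inter> - {l. l \<in> {i, j}}. 1)"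
          by (rule prod.If_cases) simp
        also have "{..<g} \<inter> {l. l \<in> {i, j}} = {i, j}" using ij by auto
        finally show "(\<Prod>l<g. (\<theta> l - m l) ^ k l) = d i \<theta> * d j \<theta>"
          using False by simp
      qed
      moreover have "covmat M X g i j = cov M X g k"
        unfolding covmat_def k_def using False by simp
      ultimately show ?thesis using P1[OF k] by simp
    qed
    have intd: "integrable \<nu> (\<lambda>\<theta>. v i * v j * (d i \<theta> * d j \<theta>))" if "i < g" "j < g" for i j
      unfolding d_def by (rule integrable_mult_right) (rule integrable_dd[OF that])
    have "(\<Sum>i<g. \<Sum>j<g. v i * covmat M X g i j * v j) = (\<Sum>i<g. \<Sum>j<g. (\<integral>\<theta>. v i * v j * (d i \<theta> * d j \<theta>) \<partial>\<nu>))"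
    proof (intro sum.cong refl)
      fix i j assume "i \<in> {..<g}" "j \<in> {..<g}"
      then have "i < g" "j < g" by simp_all
      then show "v i * covmat M X g i j * v j = (\<integral>\<theta>. v i * v j * (d i \<theta> * d j \<theta>) \<partial>\<nu>)"
        using C by simp
    qed
    also have "\<dots> = (\<Sum>i<g. (\<integral>\<theta>. (\<Sum>j<g. v i * v j * (d i \<theta> * d j \<theta>)) \<partial>\<nu>))"
    proof (intro sum.cong refl)
      fix i assume "i \<in> {..<g}"
      then show "(\<Sum>j<g. (\<integral>\<theta>. v i * v j * (d i \<theta> * d j \<theta>) \<partial>\<nu>)) = (\<integral>\<theta>. (\<Sum>j<g. v i * v j * (d i \<theta> * d j \<theta>)) \<partial>\<nu>)"
        by (intro Bochner_Integration.integral_sum[symmetric] intd) simp_all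
    qed
    also have "\<dots> = (\<integral>\<theta>. (\<Sum>i<g. \<Sum>j<g. v i * v j * (d i \<theta> * d j \<theta>)) \<partial>\<nu>)"
      by (intro Bochner_Integration.integral_sum[symmetric] Bochner_Integration.integrable_sum intd) simp_all
    also have "\<dots> \<ge> 0"
    proof (rule Bochner_Integration.integral_nonneg)
      fix \<theta> :: "nat \<Rightarrow> real"
      have "(\<Sum>i<g. \<Sum>j<g. v i * v j * (d i \<theta> * d j \<theta>)) = (\<Sum>i<g. v i * d i \<theta>) * (\<Sum>j<g. v j * d j \<theta>)"
        by (simp add: sum_product mult_ac)
      also have "\<dots> \<ge> 0" by simp
      finally show "0 \<le> (\<Sum>i<g. \<Sum>j<g. v i * v j * (d i \<theta> * d j \<theta>))" .
    qed
    finally show "0 \<le> (\<Sum>i<g. \<Sum>j<g. v i * covmat M X g i j * v j)" .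
  qed
  show ?thesis using part1 part2 part3 by blast
qed

end
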